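(* Let $\epsilon\in(0,1)$ and let $P_M=\frac{1}{2M}\sum_{i=1}^N\frac{\sigma_n^2d_i^\alpha}{\sigma_{v,i}^2}$. (a) For every $M\ge1$, $P_D^{(M)}(P_M)\ \ge\ \epsilon^{1/(1+\frac{\sigma_\theta^2}{3}\sum_{i=1}^N\sigma_{v,i}^{-2})}\ >\ \epsilon$. (b) For every $\mathbf{h}\in\mathbb{C}^N$ with all entries nonzero and every $M\ge1$, $\epsilon<P_D^s(P_M;\mathbf{h})\le\epsilon^{1/(1+\zeta_M)}$, where $\zeta_M=\frac{\mathbf{h}^H\mathbf{h}}{2M}\sum_{i=1}^N\frac{\sigma_\theta^2 d_i^\alpha}{\sigma_{v,i}^2}$; in particular, if $\mathbf{h}$ is random with independent entries $h_i\sim\mathcal{CN}(0,d_i^{-\alpha})$, then $\zeta_M\to0$ in probability and $P_D^s(P_M;\mathbf{h})\to\epsilon$ in probability as $M\to\infty$. (c) For every $M\ge1$, every $P>0$ and every $\mathbf{h}$ with all entries nonzero, both $P_D^{(M)}(P)$ and $P_D^s(P;\mathbf{h})$ are at most $\epsilon^{1/(1+\sigma_\theta^2\sum_{i=1}^N\sigma_{v,i}^{-2})}$, are nondecreasing in $P$, and converge to $\epsilon^{1/(1+\sigma_\theta^2\sum_{i=1}^N\sigma_{v,i}^{-2})}$ as $P\to\infty$.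
   Context: Constants: $\sigma_\theta^2,\sigma_n^2>0$, $\sigma_{v,i}^2>0$, $d_i>0$, $\alpha>0$, $i=1,\dots,N$; $\mathbf{V}=\mathrm{diag}\{\sigma_{v,1}^2,\dots,\sigma_{v,N}^2\}$. Multi-antenna (large-$M$) detector: for $x\in[0,\infty)^N$ let $g_M(x)=\sum_{i=1}^N\frac{Mx_i}{\sigma_n^2d_i^\alpha+\sigma_{v,i}^2Mx_i}$ (the almost-sure large-$M$ limit of the NP detection SNR with $|a_i|^2=x_i$), $G_M(P)=\max\{g_M(x):x\ge0,\ \sum_ix_i=P\}$, and $P_D^{(M)}(P)=\epsilon^{1/(1+\sigma_\theta^2G_M(P))}$ (optimal detection probability at false-alarm probability $\epsilon$). Single-antenna detector: with scalar channel gains $\mathbf{h}=[h_1,\dots,h_N]^T$, $\mathbf{F}=\mathrm{diag}\{h_1,\dots,h_N\}$, the received signal is $y=\mathbf{a}^H\mathbf{F}\mathbf{v}+n$ under $\mathcal{H}_0$ and $y=\mathbf{a}^H\mathbf{h}\theta+\mathbf{a}^H\mathbf{F}\mathbf{v}+n$ under $\mathcal{H}_1$, $n\sim\mathcal{CN}(0,\sigma_n^2)$. Its NP detection probability at false-alarm probability $\epsilon$ is $\epsilon^{1/(1+\rho(\mathbf{a}))}$ with $\rho(\mathbf{a})=\frac{\sigma_\theta^2\mathbf{a}^H\mathbf{h}\mathbf{h}^H\mathbf{a}}{\mathbf{a}^H\mathbf{F}\mathbf{V}\mathbf{F}^H\mathbf{a}+\sigma_n^2}$. Define $S(P;\mathbf{h})=\max\{\rho(\mathbf{a}):\mathbf{a}\in\mathbb{C}^N,\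 \mathbf{a}^H\mathbf{a}=P\}$ and $P_D^s(P;\mathbf{h})=\epsilon^{1/(1+S(P;\mathbf{h}))}$. *)

theory Defs
  imports "HOL-Probability.Probability"
begin

text \<open>Indices i = 1..N are rendered as i < N (i.e. 0..N-1). Vectors in R^N / C^N are
  functions nat => real / complex of which only the entries i < N matter.
  Parameters: sn2 = sigma_n^2, st2 = sigma_theta^2, sv2 i = sigma_{v,i}^2, d i = d_i, alpha.\<close>

text \<open>Large-M limit of the detection SNR, g_M(x).\<close>
definition gM :: "nat \<Rightarrow> real \<Rightarrow> (nat \<Rightarrow> real) \<Rightarrow> (nat \<Rightarrow> real) \<Rightarrow> real \<Rightarrow> nat \<Rightarrow> (nat \<Rightarrow> real) \<Rightarrow> real" where
  "gM N sn2 sv2 d alpha M x =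
     (\<Sum>i<N. real M * x i / (sn2 * d i powr alpha + sv2 i * real M * x i))"

text \<open>G_M(P) = max { g_M(x) : x >= 0, sum x = P } (the maximum is attained; rendered as Sup).\<close>
definition GM :: "nat \<Rightarrow> real \<Rightarrow> (nat \<Rightarrow> real) \<Rightarrow> (nat \<Rightarrow> real) \<Rightarrow> real \<Rightarrow> nat \<Rightarrow> real \<Rightarrow> real" where
  "GM N sn2 sv2 d alpha M P =
     Sup (gM N sn2 sv2 d alpha M ` {x. (\<forall>i<N. 0 \<le> x i) \<and> (\<Sum>i<N. x i) = P})"

definition PD_multi :: "real \<Rightarrow> real \<Rightarrow> nat \<Rightarrow> real \<Rightarrow> (nat \<Rightarrow> real) \<Rightarrow> (nat \<Rightarrow> real) \<Rightarrow> real \<Rightarrow> nat \<Rightarrow> real \<Rightarrow> real" where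
  "PD_multi eps st2 N sn2 sv2 d alpha M P = eps powr (1 / (1 + st2 * GM N sn2 sv2 d alpha M P))"

text \<open>Single-antenna SNR rho(a) = st2 a^H h h^H a / (a^H F V F^H a + sn2), with
  F = diag(h), V = diag(sv2): a^H h h^H a = |a^H h|^2 and
  a^H F V F^H a = sum_i |a_i|^2 |h_i|^2 sv2_i.\<close>
definition rho :: "real \<Rightarrow> nat \<Rightarrow> real \<Rightarrow> (nat \<Rightarrow> real) \<Rightarrow> (nat \<Rightarrow> complex) \<Rightarrow> (nat \<Rightarrow> complex) \<Rightarrow> real" where
  "rho st2 N sn2 sv2 h a =
     st2 * (cmod (\<Sum>i<N. cnj (a i) * h i))\<^sup>2 /
       ((\<Sum>i<N. (cmod (a i))\<^sup>2 * (cmod (h i))\<^sup>2 * sv2 i) + sn2)"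

definition S_single :: "real \<Rightarrow> nat \<Rightarrow> real \<Rightarrow> (nat \<Rightarrow> real) \<Rightarrow> real \<Rightarrow> (nat \<Rightarrow> complex) \<Rightarrow> real" where
  "S_single st2 N sn2 sv2 P h = Sup (rho st2 N sn2 sv2 h ` {a. (\<Sum>i<N. (cmod (a i))\<^sup>2) = P})"

definition PD_single :: "real \<Rightarrow> real \<Rightarrow> nat \<Rightarrow> real \<Rightarrow> (nat \<Rightarrow> real) \<Rightarrow> real \<Rightarrow> (nat \<Rightarrow> complex) \<Rightarrow> real" where
  "PD_single eps st2 N sn2 sv2 P h = eps powr (1 / (1 + S_single st2 N sn2 sv2 P h))"

definition cgauss_density :: "real \<Rightarrow> complex \<Rightarrow> ennreal" where
  "cgauss_density s z = ennreal (exp (- (cmod z)\<^sup>2 / s) / (pi * s))"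

text \<open>Convergence in probability of X_n to the constant c (stated with outer probability, so
  that it does not depend on measurability of the events).\<close>
definition conv_in_prob :: "'a measure \<Rightarrow> (nat \<Rightarrow> 'a \<Rightarrow> real) \<Rightarrow> real \<Rightarrow> bool" where
  "conv_in_prob Q X c \<longleftrightarrow>
     (\<forall>e>0. \<forall>\<delta>>0. eventually (\<lambda>n. \<exists>A\<in>sets Q.
        {\<omega>\<in>space Q. \<bar>X n \<omega> - c\<bar> > e} \<subseteq> A \<and> measure Q A < \<delta>) sequentially)"

end

theory Submission
  imports Defs
begin

lemma cmod_sum_le: "cmod (\<Sum>i<N. cnj (a i) * h i) \<le> (\<Sum>i<N. cmod (a i) * cmod (h i))"
  by (rule order_trans[OF norm_sum]) (simp add: norm_mult)

lemma cs1: "(cmod (\<Sum>i<N. cnj (a i) * h i))\<^sup>2 \<le> (\<Sum>i<N. (cmod (a i))\<^sup>2) * (\<Sum>i<N. (cmod (h i))\<^sup>2)"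
proof -
  have "(cmod (\<Sum>i<N. cnj (a i) * h i))\<^sup>2 \<le> (\<Sum>i<N. cmod (a i) * cmod (h i))\<^sup>2"
    by (rule power_mono[OF cmod_sum_le]) simp
  also have "\<dots> \<le> (\<Sum>i<N. (cmod (a i))\<^sup>2) * (\<Sum>i<N. (cmod (h i))\<^sup>2)"
    by (rule Cauchy_Schwarz_ineq_sum)
  finally show ?thesis .
qed

lemma cs2:
  assumes w: "\<And>i. i < N \<Longrightarrow> w i > (0::real)"
  shows "(cmod (\<Sum>i<N. cnj (a i) * h i))\<^sup>2 \<le> (\<Sum>i<N. (cmod (a i))\<^sup>2 * (cmod (h i))\<^sup>2 * w i) * (\<Sum>i<N. 1 / w i)"
proof -
  have "(cmod (\<Sum>i<N. cnj (a i) * h i))\<^sup>2 \<le> (\<Sum>i<N. cmod (a i) * cmod (h i))\<^sup>2"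
    by (rule power_mono[OF cmod_sum_le]) simp
  also have "(\<Sum>i<N. cmod (a i) * cmod (h i)) = (\<Sum>i<N. (cmod (a i) * cmod (h i) * sqrt (w i)) * (1 / sqrt (w i)))"
  proof (rule sum.cong)
    fix i assume "i \<in> {..<N}" then have "w i > 0" using w by auto
    then show "cmod (a i) * cmod (h i) = (cmod (a i) * cmod (h i) * sqrt (w i)) * (1 / sqrt (w i))" by simp
  qed simp
  also have "(\<dots>)\<^sup>2 \<le> (\<Sum>i<N. (cmod (a i) * cmod (h i) * sqrt (w i))\<^sup>2) * (\<Sum>i<N. (1 / sqrt (w i))\<^sup>2)"
    by (rule Cauchy_Schwarz_ineq_sum)
  also have "(\<Sum>i<N. (cmod (a i) * cmod (h i) * sqrt (w i))\<^sup>2) = (\<Sum>i<N. (cmod (a i))\<^sup>2 * (cmod (h i))\<^sup>2 * w i)"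
    using w by (intro sum.cong) (auto simp: power_mult_distrib less_imp_le)
  also have "(\<Sum>i<N. (1 / sqrt (w i))\<^sup>2) = (\<Sum>i<N. 1 / w i)"
    using w by (intro sum.cong) (auto simp: power_divide less_imp_le)
  finally show ?thesis .
qed

locale Sctx =
  fixes N :: nat and st2 sn2 :: real and sv2 :: "nat \<Rightarrow> real"
  assumes N: "N \<ge> 1" and st2: "st2 > 0" and sn2: "sn2 > 0" and sv2: "\<And>i. i<N \<Longrightarrow> sv2 i > 0"
begin

lemma sv2_nn: "i < N \<Longrightarrow> 0 \<le> sv2 i" using sv2[of i] by simp

lemma den_pos: "(\<Sum>i<N. (cmod (a i))\<^sup>2 * (cmod (h i))\<^sup>2 * sv2 i) + sn2 > 0"
proof -
  have "(\<Sum>i<N. (cmod (a i))\<^sup>2 * (cmod (h i))\<^sup>2 * sv2 i) \<ge> 0"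
    by (intro sum_nonneg) (auto intro!: mult_nonneg_nonneg sv2_nn)
  then show ?thesis using sn2 by linarith
qed

lemma rho_nonneg: "0 \<le> rho st2 N sn2 sv2 h a"
  unfolding rho_def using den_pos[of a h] st2 by auto

lemma rho_le_K: "rho st2 N sn2 sv2 h a \<le> st2 * (\<Sum>i<N. 1 / sv2 i)"
proof -
  define D where "D = (\<Sum>i<N. (cmod (a i))\<^sup>2 * (cmod (h i))\<^sup>2 * sv2 i)"
  define K where "K = (\<Sum>i<N. 1 / sv2 i)"
  have Dp: "D + sn2 > 0" unfolding D_def by (rule den_pos)
  have K0: "K \<ge> 0" unfolding K_def using sv2 by (intro sum_nonneg) (auto simp: less_imp_le)
  have "(cmod (\<Sum>i<N. cnj (a i) * h i))\<^sup>2 \<le> D * K" unfolding D_def K_def by (rule cs2[OF sv2])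
  also have "\<dots> \<le> (D + sn2) * K" using K0 sn2 by (intro mult_right_mono) auto
  finally have "st2 * (cmod (\<Sum>i<N. cnj (a i) * h i))\<^sup>2 \<le> st2 * ((D + sn2) * K)"
    using st2 by (intro mult_left_mono) auto
  moreover have "st2 * ((D + sn2) * K) = st2 * K * (D + sn2)" by (simp add: ac_simps)
  ultimately show ?thesis unfolding rho_def D_def[symmetric] K_def[symmetric]
    by (simp add: pos_divide_le_eq[OF Dp])
qed

lemma rho_le_P:
  assumes "(\<Sum>i<N. (cmod (a i))\<^sup>2) = P"
  shows "rho st2 N sn2 sv2 h a \<le> st2 * P * (\<Sum>i<N. (cmod (h i))\<^sup>2) / sn2"
proof -
  define D where "D = (\<Sum>i<N. (cmod (a i))\<^sup>2 * (cmod (h i))\<^sup>2 * sv2 i)"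
  have D0: "D \<ge> 0" 
    unfolding D_def by (intro sum_nonneg) (auto intro!: mult_nonneg_nonneg sv2_nn)
  have X: "(cmod (\<Sum>i<N. cnj (a i) * h i))\<^sup>2 \<le> P * (\<Sum>i<N. (cmod (h i))\<^sup>2)"
    using cs1[where N=N and a=a and h=h] assms by simp
  have "rho st2 N sn2 sv2 h a = st2 * (cmod (\<Sum>i<N. cnj (a i) * h i))\<^sup>2 / (D + sn2)"
    unfolding rho_def D_def ..
  also have "\<dots> \<le> st2 * (cmod (\<Sum>i<N. cnj (a i) * h i))\<^sup>2 / sn2"
    using D0 sn2 st2 by (intro divide_left_mono mult_nonneg_nonneg) auto
  also have "\<dots> \<le> st2 * (P * (\<Sum>i<N. (cmod (h i))\<^sup>2)) / sn2"
    using X st2 sn2 by (intro divide_right_mono mult_left_mono) auto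
  finally show ?thesis by simp
qed

lemma ex_a:
  assumes "P \<ge> 0"
  shows "(\<lambda>i. if i = 0 then complex_of_real (sqrt P) else 0) \<in> {a. (\<Sum>i<N. (cmod (a i))\<^sup>2) = P}"
proof -
  have "(\<Sum>i<N. (cmod (if i = 0 then complex_of_real (sqrt P) else 0))\<^sup>2) = (\<Sum>i<N. if i = 0 then P else 0)"
    using assms by (intro sum.cong) auto
  also have "\<dots> = P" using N by (simp add: sum.delta)
  finally show ?thesis by simp
qed

lemma S_props:
  assumes P: "P \<ge> 0"
  shows "0 \<le> S_single st2 N sn2 sv2 P h"
    and "S_single st2 N sn2 sv2 P h \<le> st2 * (\<Sum>i<N. 1 / sv2 i)"
    and "S_single st2 N sn2 sv2 P h \<le> st2 * P * (\<Sum>i<N. (cmod (h i))\<^sup>2) / sn2"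
    and "\<And>a. (\<Sum>i<N. (cmod (a i))\<^sup>2) = P \<Longrightarrow> rho st2 N sn2 sv2 h a \<le> S_single st2 N sn2 sv2 P h"
proof -
  let ?A = "{a. (\<Sum>i<N. (cmod (a i))\<^sup>2) = P}"
  have "?A \<noteq> {}" using ex_a[OF P] by (metis empty_iff)
  then have ne: "rho st2 N sn2 sv2 h ` ?A \<noteq> {}" by (simp only: image_is_empty not_False_eq_True)
  have bdd: "bdd_above (rho st2 N sn2 sv2 h ` ?A)"
    by (rule bdd_aboveI2[where M = "st2 * (\<Sum>i<N. 1 / sv2 i)"]) (rule rho_le_K)
  show up: "\<And>a. (\<Sum>i<N. (cmod (a i))\<^sup>2) = P \<Longrightarrow> rho st2 N sn2 sv2 h a \<le> S_single st2 N sn2 sv2 P h"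
  proof -
    fix a assume "(\<Sum>i<N. (cmod (a i))\<^sup>2) = P"
    then have "a \<in> ?A" by blast
    then show "rho st2 N sn2 sv2 h a \<le> S_single st2 N sn2 sv2 P h"
      unfolding S_single_def by (rule cSup_upper[OF imageI bdd])
  qed
  have a0: "(\<lambda>i. if i = 0 then complex_of_real (sqrt P) else 0) \<in> ?A" by (rule ex_a[OF P])
  show "0 \<le> S_single st2 N sn2 sv2 P h"
    using up[OF a0[unfolded mem_Collect_eq]] rho_nonneg by (meson order_trans)
  show "S_single st2 N sn2 sv2 P h \<le> st2 * (\<Sum>i<N. 1 / sv2 i)"
    unfolding S_single_def by (rule cSup_least[OF ne]) (blast intro: rho_le_K)
  show "S_single st2 N sn2 sv2 P h \<le> st2 * P * (\<Sum>i<N. (cmod (h i))\<^sup>2) / sn2"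
    unfolding S_single_def
  proof (rule cSup_least[OF ne])
    fix x assume "x \<in> rho st2 N sn2 sv2 h ` ?A"
    then obtain a where a: "a \<in> ?A" "x = rho st2 N sn2 sv2 h a" by blast
    show "x \<le> st2 * P * (\<Sum>i<N. (cmod (h i))\<^sup>2) / sn2"
      using rho_le_P[where a=a and P=P and h=h] a by blast
  qed
qed

lemma S_least:
  assumes P: "P \<ge> 0" and le: "\<And>a. (\<Sum>i<N. (cmod (a i))\<^sup>2) = P \<Longrightarrow> rho st2 N sn2 sv2 h a \<le> y"
  shows "S_single st2 N sn2 sv2 P h \<le> y"
proof -
  let ?A = "{a. (\<Sum>i<N. (cmod (a i))\<^sup>2) = P}"
  have "?A \<noteq> {}" using ex_a[OF P] by (metis empty_iff)
  then have ne: "rho st2 N sn2 sv2 h ` ?A \<noteq> {}" by (simp only: image_is_empty not_False_eq_True)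
  show ?thesis unfolding S_single_def
  proof (rule cSup_least[OF ne])
    fix x assume "x \<in> rho st2 N sn2 sv2 h ` ?A"
    then obtain a where a: "a \<in> ?A" "x = rho st2 N sn2 sv2 h a" by blast
    show "x \<le> y" using le[of a] a by blast
  qed
qed

lemma rho_scale:
  "rho st2 N sn2 sv2 h (\<lambda>i. complex_of_real c * a i) =
   st2 * (c\<^sup>2 * (cmod (\<Sum>i<N. cnj (a i) * h i))\<^sup>2) /
     (c\<^sup>2 * (\<Sum>i<N. (cmod (a i))\<^sup>2 * (cmod (h i))\<^sup>2 * sv2 i) + sn2)"
proof -
  have 1: "(\<Sum>i<N. cnj (complex_of_real c * a i) * h i) = complex_of_real c * (\<Sum>i<N. cnj (a i) * h i)"
    by (simp add: sum_distrib_left mult.assoc)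
  have 2: "(\<Sum>i<N. (cmod (complex_of_real c * a i))\<^sup>2 * (cmod (h i))\<^sup>2 * sv2 i)
      = c\<^sup>2 * (\<Sum>i<N. (cmod (a i))\<^sup>2 * (cmod (h i))\<^sup>2 * sv2 i)"
    by (simp add: sum_distrib_left norm_mult power_mult_distrib mult.assoc)
  show ?thesis unfolding rho_def 1 2 by (simp add: norm_mult power_mult_distrib)
qed

lemma rho_scale_mono:
  assumes c: "c \<ge> 1"
  shows "rho st2 N sn2 sv2 h a \<le> rho st2 N sn2 sv2 h (\<lambda>i. complex_of_real c * a i)"
proof -
  define X where "X = (cmod (\<Sum>i<N. cnj (a i) * h i))\<^sup>2"
  define D where "D = (\<Sum>i<N. (cmod (a i))\<^sup>2 * (cmod (h i))\<^sup>2 * sv2 i)"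
  have D0: "D \<ge> 0" unfolding D_def by (intro sum_nonneg) (auto intro!: mult_nonneg_nonneg sv2_nn)
  have X0: "X \<ge> 0" unfolding X_def by simp
  have c2: "c\<^sup>2 \<ge> 1" using c by (simp add: one_le_power)
  have p1: "D + sn2 > 0" using D0 sn2 by linarith
  have p2: "c\<^sup>2 * D + sn2 > 0" using D0 sn2 c2 by (smt (verit) mult_nonneg_nonneg)
  have "st2 * X * (c\<^sup>2 * D + sn2) \<le> st2 * (c\<^sup>2 * X) * (D + sn2)"
  proof -
    have "1 * X \<le> c\<^sup>2 * X" using c2 X0 by (rule mult_right_mono)
    then have "X * sn2 \<le> c\<^sup>2 * X * sn2" using sn2 by (intro mult_right_mono) auto
    then have "X * (c\<^sup>2 * D + sn2) \<le> (c\<^sup>2 * X) * (D + sn2)" by (simp add: algebra_simps)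
    then show ?thesis using st2 by (simp add: mult.assoc)
  qed
  then have "st2 * X / (D + sn2) \<le> st2 * (c\<^sup>2 * X) / (c\<^sup>2 * D + sn2)"
    using p1 p2 by (simp add: divide_le_eq le_divide_eq mult.commute)
  moreover have "rho st2 N sn2 sv2 h (\<lambda>i. complex_of_real c * a i) = st2 * (c\<^sup>2 * X) / (c\<^sup>2 * D + sn2)"
    unfolding X_def D_def by (rule rho_scale)
  moreover have "rho st2 N sn2 sv2 h a = st2 * X / (D + sn2)" unfolding rho_def X_def D_def ..
  ultimately show ?thesis by simp
qed

lemma S_mono:
  assumes P: "0 < P" "P \<le> P'"
  shows "S_single st2 N sn2 sv2 P h \<le> S_single st2 N sn2 sv2 P' h"
proof (rule S_least)
  show "0 \<le> P" using P by simp
  fix a assume a: "(\<Sum>i<N. (cmod (a i))\<^sup>2) = P"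
  define c where "c = sqrt (P' / P)"
  have c1: "c \<ge> 1" unfolding c_def using P by simp
  have "(\<Sum>i<N. (cmod (complex_of_real c * a i))\<^sup>2) = c\<^sup>2 * P"
    using a by (simp add: norm_mult power_mult_distrib sum_distrib_left[symmetric])
  also have "c\<^sup>2 = P' / P" unfolding c_def using P by simp
  finally have "(\<Sum>i<N. (cmod (complex_of_real c * a i))\<^sup>2) = P'" using P by simp
  then have "rho st2 N sn2 sv2 h (\<lambda>i. complex_of_real c * a i) \<le> S_single st2 N sn2 sv2 P' h"
    using S_props(4)[where P=P' and h=h] P by simp
  then show "rho st2 N sn2 sv2 h a \<le> S_single st2 N sn2 sv2 P' h"
    using rho_scale_mono[OF c1, of h a] by linarith
qed

lemma K_pos: "(\<Sum>i<N. 1 / sv2 i) > 0"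
proof -
  have "(\<Sum>i<N. 1 / sv2 i) \<ge> (\<Sum>i<1. 1 / sv2 i)"
    using N by (intro sum_mono2) (auto dest: sv2_nn)
  moreover have "(\<Sum>i<1. 1 / sv2 i) > 0" using sv2[of 0] N by simp
  ultimately show ?thesis by linarith
qed

lemma L_pos:
  assumes h: "\<forall>i<N. h i \<noteq> 0"
  shows "(\<Sum>i<N. 1 / ((cmod (h i))\<^sup>2 * (sv2 i)\<^sup>2)) > 0"
proof -
  have "(\<Sum>i<N. 1 / ((cmod (h i))\<^sup>2 * (sv2 i)\<^sup>2)) \<ge> (\<Sum>i<1. 1 / ((cmod (h i))\<^sup>2 * (sv2 i)\<^sup>2))"
    using N sv2 by (intro sum_mono2) auto
  moreover have "(\<Sum>i<1. 1 / ((cmod (h i))\<^sup>2 * (sv2 i)\<^sup>2)) > 0" using sv2[of 0] h N by simp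
  ultimately show ?thesis by linarith
qed

lemma S_ge:
  assumes h: "\<forall>i<N. h i \<noteq> 0" and P: "P \<ge> 0"
  shows "st2 * (P / (\<Sum>i<N. 1 / ((cmod (h i))\<^sup>2 * (sv2 i)\<^sup>2))) * (\<Sum>i<N. 1 / sv2 i)\<^sup>2
     / ((P / (\<Sum>i<N. 1 / ((cmod (h i))\<^sup>2 * (sv2 i)\<^sup>2))) * (\<Sum>i<N. 1 / sv2 i) + sn2)
     \<le> S_single st2 N sn2 sv2 P h"
proof -
  define K where "K = (\<Sum>i<N. 1 / sv2 i)"
  define L where "L = (\<Sum>i<N. 1 / ((cmod (h i))\<^sup>2 * (sv2 i)\<^sup>2))"
  have K: "K > 0" unfolding K_def by (rule K_pos)
  have L: "L > 0" unfolding L_def by (rule L_pos[OF h])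
  define t where "t = sqrt (P / L)"
  have t0: "t \<ge> 0" unfolding t_def using P L by simp
  have t2: "t\<^sup>2 = P / L" unfolding t_def using P L by simp
  define a where "a = (\<lambda>i. complex_of_real t / (cnj (h i) * complex_of_real (sv2 i)))"
  have e1: "cnj (a i) * h i = complex_of_real (t / sv2 i)" if "i < N" for i
    using h that sv2[OF that] unfolding a_def by (simp add: field_simps)
  have "(\<Sum>i<N. cnj (a i) * h i) = (\<Sum>i<N. complex_of_real (t / sv2 i))"
    using e1 by (intro sum.cong) auto
  also have "\<dots> = complex_of_real (t * K)" unfolding K_def by (simp add: sum_distrib_left)
  finally have X: "(cmod (\<Sum>i<N. cnj (a i) * h i))\<^sup>2 = t\<^sup>2 * K\<^sup>2"
    using t0 K by (simp add: power_mult_distrib norm_mult)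
  have e2: "(cmod (a i))\<^sup>2 = t\<^sup>2 / ((cmod (h i))\<^sup>2 * (sv2 i)\<^sup>2)" if "i < N" for i
    using h that sv2[OF that] t0 unfolding a_def by (simp add: norm_divide norm_mult power_divide power_mult_distrib)
  have "(\<Sum>i<N. (cmod (a i))\<^sup>2) = (\<Sum>i<N. t\<^sup>2 * (1 / ((cmod (h i))\<^sup>2 * (sv2 i)\<^sup>2)))"
    using e2 by (intro sum.cong) auto
  also have "\<dots> = P" unfolding sum_distrib_left[symmetric] L_def[symmetric] t2 using L by simp
  finally have aP: "(\<Sum>i<N. (cmod (a i))\<^sup>2) = P" .
  have e3: "(cmod (a i))\<^sup>2 * (cmod (h i))\<^sup>2 * sv2 i = t\<^sup>2 * (1 / sv2 i)" if "i < N" for i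
    using e2[OF that] h that sv2[OF that] by (simp add: field_simps power2_eq_square)
  have D: "(\<Sum>i<N. (cmod (a i))\<^sup>2 * (cmod (h i))\<^sup>2 * sv2 i) = t\<^sup>2 * K"
    unfolding K_def sum_distrib_left using e3 by (intro sum.cong) auto
  have r: "rho st2 N sn2 sv2 h a = st2 * (t\<^sup>2 * K\<^sup>2) / (t\<^sup>2 * K + sn2)"
    unfolding rho_def X D ..
  have "rho st2 N sn2 sv2 h a \<le> S_single st2 N sn2 sv2 P h" by (rule S_props(4)[where h=h, OF P aP])
  then have "st2 * (t\<^sup>2 * K\<^sup>2) / (t\<^sup>2 * K + sn2) \<le> S_single st2 N sn2 sv2 P h" unfolding r .
  then show ?thesis unfolding K_def[symmetric] L_def[symmetric] t2 by (simp add: mult.assoc)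
qed

end

lemma cross_le:
  fixes x w p q :: real
  assumes "0 < p" "0 < q" "x * q \<le> w * p"
  shows "x / p \<le> w / q"
proof -
  have "(x * q - w * p) / (p * q) \<le> 0" using assms by (intro divide_nonpos_pos) auto
  then show ?thesis using assms by (simp add: frac_le_eq)
qed

lemma term_mono:
  fixes m A b y y' :: real
  assumes "A > 0" "b \<ge> 0" "m \<ge> 0" "0 \<le> y" "y \<le> y'"
  shows "m * y / (A + b * y) \<le> m * y' / (A + b * y')"
proof -
  have p1: "A + b * y > 0" using assms by (smt (verit) mult_nonneg_nonneg)
  have p2: "A + b * y' > 0" using assms by (smt (verit) mult_nonneg_nonneg)
  have "m * y' * (A + b * y) - m * y * (A + b * y') = m * A * (y' - y)" by (simp add: algebra_simps)
  also have "\<dots> \<ge> 0" using assms by (intro mult_nonneg_nonneg) auto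
  finally have "m * y * (A + b * y') \<le> m * y' * (A + b * y)" by simp
  then show ?thesis using p1 p2 by (intro cross_le) auto
qed

lemma term_lim:
  fixes m n A s :: real
  assumes "m > 0" "n > 0" "A > 0" "s > 0"
  shows "((\<lambda>P. m * (P / n) / (A + s * m * (P / n))) \<longlongrightarrow> 1 / s) at_top"
proof -
  have lim: "((\<lambda>P::real. 1 / ((A * n / m) * inverse P + s)) \<longlongrightarrow> 1 / ((A * n / m) * 0 + s)) at_top"
    using assms by (intro tendsto_intros tendsto_inverse_0_at_top filterlim_ident) auto
  have ev: "\<forall>\<^sub>F P in at_top. 1 / ((A * n / m) * inverse P + s) = m * (P / n) / (A + s * m * (P / n))"
    using eventually_gt_at_top[of "0::real"]
  proof (rule eventually_mono)
    fix P :: real assume "P > 0"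
    then show "1 / ((A * n / m) * inverse P + s) = m * (P / n) / (A + s * m * (P / n))"
      using assms by (simp add: field_simps)
  qed
  show ?thesis using tendsto_cong[OF ev] lim by simp
qed

locale Gctx =
  fixes N :: nat and sn2 alpha :: real and sv2 d :: "nat \<Rightarrow> real" and M :: nat
  assumes N: "N \<ge> 1" and sn2: "sn2 > 0" and sv2: "\<And>i. i<N \<Longrightarrow> sv2 i > 0"
    and d: "\<And>i. i<N \<Longrightarrow> d i > 0" and M: "M \<ge> 1"
begin

lemma A_pos: "i < N \<Longrightarrow> sn2 * d i powr alpha > 0"
proof -
  assume i: "i < N"
  have "d i powr alpha > 0" using d[OF i] by simp
  then show ?thesis using sn2 by simp
qed

lemma gM_nonneg: "(\<forall>i<N. 0 \<le> x i) \<Longrightarrow> 0 \<le> gM N sn2 sv2 d alpha M x"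
  unfolding gM_def
proof (intro sum_nonneg)
  fix i assume x: "\<forall>i<N. 0 \<le> x i" and i: "i \<in> {..<N}"
  have "0 \<le> sv2 i * real M * x i" using sv2[of i] i x by simp
  then have "0 \<le> sn2 * d i powr alpha + sv2 i * real M * x i" using A_pos[of i] i by simp
  then show "0 \<le> real M * x i / (sn2 * d i powr alpha + sv2 i * real M * x i)" using x i by simp
qed

lemma term_le: 
  assumes "i < N" "y \<ge> 0"
  shows "real M * y / (sn2 * d i powr alpha + sv2 i * real M * y) \<le> 1 / sv2 i"
proof -
  have A: "sn2 * d i powr alpha > 0" by (rule A_pos[OF assms(1)])
  have s: "sv2 i > 0" using sv2 assms by auto
  have "sv2 i * real M * y \<ge> 0" using s assms by simp
  then have p: "sn2 * d i powr alpha + sv2 i * real M * y > 0" using A by linarith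
  have "real M * y * sv2 i \<le> 1 * (sn2 * d i powr alpha + sv2 i * real M * y)" using A by (simp add: algebra_simps)
  then show ?thesis using p s by (intro cross_le) auto
qed

lemma gM_le_K: "(\<forall>i<N. 0 \<le> x i) \<Longrightarrow> gM N sn2 sv2 d alpha M x \<le> (\<Sum>i<N. 1 / sv2 i)"
  unfolding gM_def by (intro sum_mono term_le) auto

lemma gM_mono: 
  assumes "\<forall>i<N. 0 \<le> x i" "\<forall>i<N. x i \<le> x' i"
  shows "gM N sn2 sv2 d alpha M x \<le> gM N sn2 sv2 d alpha M x'"
  unfolding gM_def
proof (rule sum_mono)
  fix i assume i: "i \<in> {..<N}"
  have "sv2 i \<ge> 0" using sv2 i by (simp add: less_imp_le)
  then show "real M * x i / (sn2 * d i powr alpha + sv2 i * real M * x i)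
      \<le> real M * x' i / (sn2 * d i powr alpha + sv2 i * real M * x' i)"
    using term_mono[of "sn2 * d i powr alpha" "sv2 i * real M" "real M" "x i" "x' i"] A_pos assms i
    by (simp add: mult.assoc)
qed

lemma ex_x:
  assumes "(P::real) \<ge> 0"
  shows "(\<lambda>i. if i = 0 then P else 0) \<in> {x. (\<forall>i<N. 0 \<le> x i) \<and> (\<Sum>i<N. x i) = P}"
  using assms N by (auto simp: sum.delta)

lemma GM_props:
  assumes P: "P \<ge> 0"
  shows "GM N sn2 sv2 d alpha M P \<le> (\<Sum>i<N. 1 / sv2 i)"
    and "\<And>x. (\<forall>i<N. 0 \<le> x i) \<Longrightarrow> (\<Sum>i<N. x i) = P \<Longrightarrow> gM N sn2 sv2 d alpha M x \<le> GM N sn2 sv2 d alpha M P"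
    and "\<And>y. (\<And>x. (\<forall>i<N. 0 \<le> x i) \<Longrightarrow> (\<Sum>i<N. x i) = P \<Longrightarrow> gM N sn2 sv2 d alpha M x \<le> y) \<Longrightarrow> GM N sn2 sv2 d alpha M P \<le> y"
proof -
  let ?A = "{x. (\<forall>i<N. 0 \<le> x i) \<and> (\<Sum>i<N. x i) = P}"
  have "?A \<noteq> {}" using ex_x[OF P] by (metis empty_iff)
  then have ne: "gM N sn2 sv2 d alpha M ` ?A \<noteq> {}" by (simp only: image_is_empty not_False_eq_True)
  have bdd: "bdd_above (gM N sn2 sv2 d alpha M ` ?A)"
  proof (rule bdd_aboveI2[where M = "\<Sum>i<N. 1 / sv2 i"])
    fix x assume "x \<in> ?A" then show "gM N sn2 sv2 d alpha M x \<le> (\<Sum>i<N. 1 / sv2 i)"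
      using gM_le_K by blast
  qed
  show "\<And>x. (\<forall>i<N. 0 \<le> x i) \<Longrightarrow> (\<Sum>i<N. x i) = P \<Longrightarrow> gM N sn2 sv2 d alpha M x \<le> GM N sn2 sv2 d alpha M P"
  proof -
    fix x assume "\<forall>i<N. 0 \<le> x i" "(\<Sum>i<N. x i) = P"
    then have "x \<in> ?A" by blast
    then show "gM N sn2 sv2 d alpha M x \<le> GM N sn2 sv2 d alpha M P"
      unfolding GM_def by (rule cSup_upper[OF imageI bdd])
  qed
  show le: "\<And>y. (\<And>x. (\<forall>i<N. 0 \<le> x i) \<Longrightarrow> (\<Sum>i<N. x i) = P \<Longrightarrow> gM N sn2 sv2 d alpha M x \<le> y) \<Longrightarrow> GM N sn2 sv2 d alpha M P \<le> y"
  proof -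
    fix y assume le: "\<And>x. (\<forall>i<N. 0 \<le> x i) \<Longrightarrow> (\<Sum>i<N. x i) = P \<Longrightarrow> gM N sn2 sv2 d alpha M x \<le> y"
    show "GM N sn2 sv2 d alpha M P \<le> y" unfolding GM_def
    proof (rule cSup_least[OF ne])
      fix z assume "z \<in> gM N sn2 sv2 d alpha M ` ?A"
      then obtain x where x: "x \<in> ?A" "z = gM N sn2 sv2 d alpha M x" by blast
      show "z \<le> y" using le[of x] x by blast
    qed
  qed
  show "GM N sn2 sv2 d alpha M P \<le> (\<Sum>i<N. 1 / sv2 i)" by (rule le) (rule gM_le_K)
qed

lemma GM_mono:
  assumes P: "0 < P" "P \<le> P'"
  shows "GM N sn2 sv2 d alpha M P \<le> GM N sn2 sv2 d alpha M P'"
proof (rule GM_props(3))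
  show "0 \<le> P" using P by simp
  fix x assume x: "\<forall>i<N. 0 \<le> x i" "(\<Sum>i<N. x i) = P"
  define x' where "x' = (\<lambda>i. x i + (if i = 0 then P' - P else 0))"
  have "(\<Sum>i<N. x' i) = (\<Sum>i<N. x i) + (\<Sum>i<N. if i = 0 then P' - P else 0)"
    unfolding x'_def by (rule sum.distrib)
  also have "\<dots> = P'" using x N by (simp add: sum.delta)
  finally have s: "(\<Sum>i<N. x' i) = P'" .
  have le: "\<forall>i<N. x i \<le> x' i" unfolding x'_def using P by auto
  have nn: "\<forall>i<N. 0 \<le> x' i" using le x by (meson order_trans)
  have "gM N sn2 sv2 d alpha M x' \<le> GM N sn2 sv2 d alpha M P'"
    using GM_props(2)[of P' x'] nn s P by simp
  then show "gM N sn2 sv2 d alpha M x \<le> GM N sn2 sv2 d alpha M P'"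
    using gM_mono[OF x(1) le] by linarith
qed

lemma GM_nonneg: "P \<ge> 0 \<Longrightarrow> 0 \<le> GM N sn2 sv2 d alpha M P"
proof -
  assume P: "P \<ge> 0"
  have "0 \<le> gM N sn2 sv2 d alpha M (\<lambda>i. if i = 0 then P else 0)"
    using P by (intro gM_nonneg) auto
  also have "\<dots> \<le> GM N sn2 sv2 d alpha M P"
  proof -
    have "(\<lambda>i. if i = 0 then P else 0) \<in> {x. (\<forall>i<N. 0 \<le> x i) \<and> (\<Sum>i<N. x i) = P}" by (rule ex_x[OF P])
    then have c: "(\<forall>i<N. 0 \<le> (\<lambda>i. if i = 0 then P else 0) i) \<and> (\<Sum>i<N. (\<lambda>i. if i = 0 then P else 0) i) = P"
      by (rule CollectD)
    show ?thesis using GM_props(2)[OF P, OF conjunct1[OF c] conjunct2[OF c]] .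
  qed
  finally show ?thesis .
qed

lemma GM_lim: "(GM N sn2 sv2 d alpha M \<longlongrightarrow> (\<Sum>i<N. 1 / sv2 i)) at_top"
proof (rule tendsto_sandwich[where f = "\<lambda>P. gM N sn2 sv2 d alpha M (\<lambda>i. P / real N)"
      and h = "\<lambda>_. \<Sum>i<N. 1 / sv2 i"])
  show "\<forall>\<^sub>F P in at_top. gM N sn2 sv2 d alpha M (\<lambda>i. P / real N) \<le> GM N sn2 sv2 d alpha M P"
    using eventually_ge_at_top[of "0::real"]
  proof (rule eventually_mono)
    fix P :: real assume P: "0 \<le> P"
    show "gM N sn2 sv2 d alpha M (\<lambda>i. P / real N) \<le> GM N sn2 sv2 d alpha M P"
      using N P by (intro GM_props(2)) auto
  qed
  show "\<forall>\<^sub>F P in at_top. GM N sn2 sv2 d alpha M P \<le> (\<Sum>i<N. 1 / sv2 i)"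
    using eventually_ge_at_top[of "0::real"] by (rule eventually_mono) (rule GM_props(1))
  show "((\<lambda>_. \<Sum>i<N. 1 / sv2 i) \<longlongrightarrow> (\<Sum>i<N. 1 / sv2 i)) at_top" by simp
  show "((\<lambda>P. gM N sn2 sv2 d alpha M (\<lambda>i. P / real N)) \<longlongrightarrow> (\<Sum>i<N. 1 / sv2 i)) at_top"
    unfolding gM_def
  proof (rule tendsto_sum)
    fix i assume i: "i \<in> {..<N}"
    show "((\<lambda>P. real M * (P / real N) / (sn2 * d i powr alpha + sv2 i * real M * (P / real N))) \<longlongrightarrow> 1 / sv2 i) at_top"
      using term_lim[of "real M" "real N" "sn2 * d i powr alpha" "sv2 i"] M N A_pos sv2 i by simp
  qed
qed

end

lemma pd_mono:
  fixes eps u v :: real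
  assumes "0 < eps" "eps < 1" "0 \<le> u" "u \<le> v"
  shows "eps powr (1 / (1 + u)) \<le> eps powr (1 / (1 + v))"
proof (rule powr_mono')
  show "1 / (1 + v) \<le> 1 / (1 + u)" using assms by (intro divide_left_mono) auto
qed (use assms in auto)

lemma pd_gt:
  fixes eps u :: real
  assumes "0 < eps" "eps < 1" "0 < u"
  shows "eps < eps powr (1 / (1 + u))"
proof -
  have l: "ln eps < 0" using assms by simp
  have t: "1 / (1 + u) < 1" using assms by simp
  have "(1 / (1 + u) - 1) * ln eps > 0" using l t by (intro mult_neg_neg) auto
  then have "ln eps < 1 / (1 + u) * ln eps" by (simp add: algebra_simps)
  then have "exp (ln eps) < exp (1 / (1 + u) * ln eps)" by simp
  then show ?thesis using assms by (simp add: powr_def)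
qed

lemma pd_cont:
  fixes eps e :: real
  assumes "0 < eps" "eps < 1" "0 < e"
  shows "\<exists>\<delta>>0. eps powr (1 / (1 + \<delta>)) < eps + e"
proof -
  have "((\<lambda>t::real. eps powr (1 / (1 + t))) \<longlongrightarrow> eps powr (1 / (1 + 0))) (at_right 0)"
    using assms by (intro tendsto_intros) auto
  then have "((\<lambda>t::real. eps powr (1 / (1 + t))) \<longlongrightarrow> eps) (at_right 0)" using assms by simp
  then have "\<forall>\<^sub>F t in at_right 0. eps powr (1 / (1 + t)) < eps + e"
    using assms by (intro order_tendstoD(2)) auto
  then obtain b :: real where b: "b > 0" "\<And>y. y > 0 \<Longrightarrow> y < b \<Longrightarrow> eps powr (1 / (1 + y)) < eps + e"
    unfolding eventually_at_right_field by auto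
  show ?thesis using b(1) b(2)[of "b/2"] by (intro exI[of _ "b/2"]) auto
qed

lemma conv_tail:
  fixes Q :: "'a measure" and X :: "nat \<Rightarrow> 'a \<Rightarrow> real"
  assumes Q: "prob_space Q" and f: "f \<in> borel_measurable Q"
    and tail: "\<And>e. e > 0 \<Longrightarrow> \<exists>\<kappa>>0. \<forall>M \<omega>. M \<ge> 1 \<longrightarrow> \<omega> \<in> space Q \<longrightarrow> \<bar>X M \<omega> - c\<bar> > e \<longrightarrow> f \<omega> > \<kappa> * real M"
  shows "conv_in_prob Q X c"
  unfolding conv_in_prob_def
proof (intro allI impI)
  interpret Q: prob_space Q by (rule Q)
  fix e \<delta> :: real assume e: "e > 0" and \<delta>: "\<delta> > 0"
  obtain \<kappa> where \<kappa>: "\<kappa> > 0" "\<And>M \<omega>. M \<ge> 1 \<Longrightarrow> \<omega> \<in> space Q \<Longrightarrow> \<bar>X M \<omega> - c\<bar> > e \<Longrightarrow> f \<omega> > \<kappa> * real M"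
    using tail[OF e] by blast
  define B where "B = (\<lambda>n::nat. {\<omega>\<in>space Q. real n < f \<omega>})"
  have Bs: "\<And>n. B n \<in> sets Q" unfolding B_def using f by measurable
  have "range B \<subseteq> sets Q" using Bs by blast
  moreover have "decseq B" unfolding B_def decseq_def by auto
  ultimately have lim: "(\<lambda>n. measure Q (B n)) \<longlonglongrightarrow> measure Q (\<Inter>n. B n)" by (rule Q.finite_Lim_measure_decseq)
  have "(\<Inter>n. B n) = {}"
  proof (rule equals0I)
    fix \<omega> assume "\<omega> \<in> (\<Inter>n. B n)"
    then have "\<And>n. real n < f \<omega>" unfolding B_def by auto
    moreover obtain n where "f \<omega> < real n" using reals_Archimedean2 by blast
    ultimately show False by (metis less_asym)
  qed
  then have "(\<lambda>n. measure Q (B n)) \<longlonglongrightarrow> 0" using lim by simp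
  then have "\<forall>\<^sub>F n in sequentially. measure Q (B n) < \<delta>" using \<delta> by (intro order_tendstoD(2)) auto
  then obtain N0 where "\<And>n. n \<ge> N0 \<Longrightarrow> measure Q (B n) < \<delta>" unfolding eventually_sequentially by blast
  then obtain n0 where n0: "measure Q (B n0) < \<delta>" by blast
  define M0 where "M0 = nat \<lceil>real n0 / \<kappa>\<rceil> + 1"
  show "\<forall>\<^sub>F M in sequentially. \<exists>A\<in>sets Q. {\<omega> \<in> space Q. e < \<bar>X M \<omega> - c\<bar>} \<subseteq> A \<and> measure Q A < \<delta>"
    unfolding eventually_sequentially
  proof (intro exI[of _ M0] allI impI bexI[of _ "B n0"] conjI)
    fix M assume M: "M0 \<le> M"
    have M1: "M \<ge> 1" using M unfolding M0_def by simp
    have "real n0 / \<kappa> \<le> real M" using M unfolding M0_def by linarith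
    then have kM: "real n0 \<le> \<kappa> * real M" using \<kappa>(1) by (simp add: pos_divide_le_eq mult.commute)
    show "{\<omega> \<in> space Q. e < \<bar>X M \<omega> - c\<bar>} \<subseteq> B n0"
    proof
      fix \<omega> assume "\<omega> \<in> {\<omega> \<in> space Q. e < \<bar>X M \<omega> - c\<bar>}"
      then have w: "\<omega> \<in> space Q" "e < \<bar>X M \<omega> - c\<bar>" by auto
      have "f \<omega> > \<kappa> * real M" by (rule \<kappa>(2)[OF M1 w])
      then show "\<omega> \<in> B n0" using kM w(1) unfolding B_def by auto
    qed
  qed (use n0 Bs in auto)
qed

lemma term_third:
  fixes a s m :: real
  assumes "a > 0" "s > 0" "m > 0"
  shows "m * (a / s / (2 * m)) / (a + s * m * (a / s / (2 * m))) = 1 / s / 3"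
proof -
  have 1: "m * (a / s / (2 * m)) = a / (2 * s)" using assms by simp
  have 2: "s * m * (a / s / (2 * m)) = a / 2" using assms by simp
  show ?thesis unfolding 1 2 using assms by (simp add: field_simps)
qed

lemma lower_lim:
  fixes K L sn2 st2 :: real
  assumes "K > 0" "L > 0" "sn2 > 0"
  shows "((\<lambda>P. st2 * (P / L) * K\<^sup>2 / ((P / L) * K + sn2)) \<longlongrightarrow> st2 * K) at_top"
proof -
  have lim: "((\<lambda>P::real. st2 * K\<^sup>2 / (K + sn2 * L * inverse P)) \<longlongrightarrow> st2 * K\<^sup>2 / (K + sn2 * L * 0)) at_top"
    using assms by (intro tendsto_intros tendsto_inverse_0_at_top filterlim_ident) auto
  have ev: "\<forall>\<^sub>F P in at_top. st2 * K\<^sup>2 / (K + sn2 * L * inverse P) = st2 * (P / L) * K\<^sup>2 / ((P / L) * K + sn2)"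
    using eventually_gt_at_top[of "0::real"]
  proof (rule eventually_mono)
    fix P :: real assume "P > 0"
    then show "st2 * K\<^sup>2 / (K + sn2 * L * inverse P) = st2 * (P / L) * K\<^sup>2 / ((P / L) * K + sn2)"
      using assms by (simp add: field_simps power2_eq_square)
  qed
  have "st2 * K\<^sup>2 / (K + sn2 * L * 0) = st2 * K" using assms by (simp add: power2_eq_square)
  then show ?thesis using tendsto_cong[OF ev] lim by simp
qed

theorem theorem2:
  fixes N :: nat and eps st2 sn2 alpha :: real and sv2 d :: "nat \<Rightarrow> real"
  assumes N: "N \<ge> 1"
    and eps: "0 < eps" "eps < 1"
    and st2: "st2 > 0" and sn2: "sn2 > 0" and alpha: "alpha > 0"
    and sv2: "\<And>i. i < N \<Longrightarrow> sv2 i > 0"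
    and d: "\<And>i. i < N \<Longrightarrow> d i > 0"
  defines "PMM \<equiv> (\<lambda>M::nat. 1 / (2 * real M) * (\<Sum>i<N. sn2 * d i powr alpha / sv2 i))"
    and "zeta \<equiv> (\<lambda>(h::nat \<Rightarrow> complex) (M::nat).
            (\<Sum>i<N. (cmod (h i))\<^sup>2) / (2 * real M) * (\<Sum>i<N. st2 * d i powr alpha / sv2 i))"
    and "PDlim \<equiv> eps powr (1 / (1 + st2 * (\<Sum>i<N. 1 / sv2 i)))"
  shows
    \<comment> \<open>(a)\<close>
    "(\<forall>M::nat. M \<ge> 1 \<longrightarrow>
        PD_multi eps st2 N sn2 sv2 d alpha M (PMM M)
          \<ge> eps powr (1 / (1 + st2 / 3 * (\<Sum>i<N. 1 / sv2 i)))
      \<and> eps powr (1 / (1 + st2 / 3 * (\<Sum>i<N. 1 / sv2 i))) > eps)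
     \<and>
    \<comment> \<open>(b), deterministic part\<close>
     (\<forall>h::nat \<Rightarrow> complex. (\<forall>i<N. h i \<noteq> 0) \<longrightarrow> (\<forall>M::nat. M \<ge> 1 \<longrightarrow>
        eps < PD_single eps st2 N sn2 sv2 (PMM M) h
      \<and> PD_single eps st2 N sn2 sv2 (PMM M) h \<le> eps powr (1 / (1 + zeta h M))))
     \<and>
    \<comment> \<open>(b), random channel part\<close>
     (\<forall>(Q::'a measure) (H::nat \<Rightarrow> 'a \<Rightarrow> complex).
        prob_space Q
        \<and> prob_space.indep_vars Q (\<lambda>_. borel) H {..<N}
        \<and> (\<forall>i<N. distributed Q lborel (H i) (cgauss_density (d i powr (- alpha))))
        \<longrightarrow> conv_in_prob Q (\<lambda>M \<omega>. zeta (\<lambda>i. H i \<omega>) M) 0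
          \<and> conv_in_prob Q (\<lambda>M \<omega>. PD_single eps st2 N sn2 sv2 (PMM M) (\<lambda>i. H i \<omega>)) eps)
     \<and>
    \<comment> \<open>(c)\<close>
     (\<forall>M::nat. M \<ge> 1 \<longrightarrow> (\<forall>h::nat \<Rightarrow> complex. (\<forall>i<N. h i \<noteq> 0) \<longrightarrow>
        (\<forall>P>0. PD_multi eps st2 N sn2 sv2 d alpha M P \<le> PDlim
               \<and> PD_single eps st2 N sn2 sv2 P h \<le> PDlim)
      \<and> mono_on {0<..} (PD_multi eps st2 N sn2 sv2 d alpha M)
      \<and> mono_on {0<..} (\<lambda>P. PD_single eps st2 N sn2 sv2 P h)
      \<and> (PD_multi eps st2 N sn2 sv2 d alpha M \<longlongrightarrow> PDlim) at_top
      \<and> ((\<lambda>P. PD_single eps st2 N sn2 sv2 P h) \<longlongrightarrow> PDlim) at_top))"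
proof -
  interpret S: Sctx N st2 sn2 sv2 by unfold_locales (use N st2 sn2 sv2 in auto)
  define K where "K = (\<Sum>i<N. 1 / sv2 i)"
  have K: "K > 0" unfolding K_def by (rule S.K_pos)
  note SP = S.S_props
  
  have PMM_pos: "PMM M > 0" if "M \<ge> 1" for M
  proof -
    have tp: "0 < sn2 * d i powr alpha / sv2 i" if "i < N" for i
      using d[OF that] sv2[OF that] sn2 by simp
    have "(\<Sum>i<N. sn2 * d i powr alpha / sv2 i) > 0"
    proof -
      have "(\<Sum>i<N. sn2 * d i powr alpha / sv2 i) \<ge> (\<Sum>i<1. sn2 * d i powr alpha / sv2 i)"
        using N by (intro sum_mono2) (auto intro!: less_imp_le[OF tp])
      moreover have "(\<Sum>i<1. sn2 * d i powr alpha / sv2 i) > 0" using N d[of 0] sv2[of 0] sn2 by simp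
      ultimately show ?thesis by linarith
    qed
    then show ?thesis unfolding PMM_def using that by simp
  qed
  have zeta_eq: "st2 * PMM M * (\<Sum>i<N. (cmod (h i))\<^sup>2) / sn2 = zeta h M" for h M
  proof -
    have "(\<Sum>i<N. st2 * d i powr alpha / sv2 i) = st2 / sn2 * (\<Sum>i<N. sn2 * d i powr alpha / sv2 i)"
      unfolding sum_distrib_left using sn2 by (intro sum.cong) auto
    then show ?thesis unfolding PMM_def zeta_def using sn2 by (simp only:) (simp add: field_simps)
  qed
  have PDb: "eps \<le> PD_single eps st2 N sn2 sv2 (PMM M) h \<and> PD_single eps st2 N sn2 sv2 (PMM M) h \<le> eps powr (1 / (1 + zeta h M))"
    if M: "M \<ge> 1" for h M
  proof -
    have P: "PMM M \<ge> 0" using PMM_pos[OF M] by simp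
    have S0: "0 \<le> S_single st2 N sn2 sv2 (PMM M) h" by (rule SP(1)[OF P])
    have Sz: "S_single st2 N sn2 sv2 (PMM M) h \<le> zeta h M" using SP(3)[OF P, of h] zeta_eq[of M h] by simp
    have "eps = eps powr (1 / (1 + 0))" using eps by simp
    also have "\<dots> \<le> PD_single eps st2 N sn2 sv2 (PMM M) h"
      unfolding PD_single_def using S0 eps by (intro pd_mono) auto
    finally show ?thesis unfolding PD_single_def using S0 Sz eps by (auto intro: pd_mono)
  qed
  have partA: "PD_multi eps st2 N sn2 sv2 d alpha M (PMM M) \<ge> eps powr (1 / (1 + st2 / 3 * K))
      \<and> eps powr (1 / (1 + st2 / 3 * K)) > eps" if M: "M \<ge> 1" for M
  proof -
    interpret G: Gctx N sn2 alpha sv2 d M by unfold_locales (use N sn2 sv2 d M in auto)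
    define x where "x = (\<lambda>i. sn2 * d i powr alpha / sv2 i / (2 * real M))"
    have Mp: "real M > 0" using M by simp
    have xnn: "\<forall>i<N. 0 \<le> x i"
    proof (intro allI impI)
      fix i assume i: "i < N"
      have "sn2 * d i powr alpha > 0" using G.A_pos i by simp
      then show "0 \<le> x i" unfolding x_def using sv2[OF i] Mp by simp
    qed
    have "(\<Sum>i<N. x i) = (\<Sum>i<N. sn2 * d i powr alpha / sv2 i) / (2 * real M)"
      unfolding x_def by (rule sum_divide_distrib[symmetric])
    also have "\<dots> = PMM M" unfolding PMM_def by simp
    finally have xs: "(\<Sum>i<N. x i) = PMM M" .
    have "gM N sn2 sv2 d alpha M x = (\<Sum>i<N. 1 / sv2 i / 3)" unfolding gM_def
    proof (rule sum.cong)
      fix i assume i: "i \<in> {..<N}"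
      have A: "sn2 * d i powr alpha > 0" using G.A_pos i by simp
      have s: "sv2 i > 0" using sv2 i by simp
      show "real M * x i / (sn2 * d i powr alpha + sv2 i * real M * x i) = 1 / sv2 i / 3"
        unfolding x_def by (rule term_third[OF A s Mp])
    qed simp
    also have "\<dots> = K / 3" unfolding K_def by (simp add: sum_divide_distrib)
    finally have g: "gM N sn2 sv2 d alpha M x = K / 3" .
    have "K / 3 \<le> GM N sn2 sv2 d alpha M (PMM M)"
      using G.GM_props(2)[OF _ xnn xs] PMM_pos[OF M] g by simp
    then have "eps powr (1 / (1 + st2 / 3 * K)) \<le> eps powr (1 / (1 + st2 * GM N sn2 sv2 d alpha M (PMM M)))"
      using eps st2 K by (intro pd_mono) (auto intro!: mult_left_mono)
    moreover have "eps < eps powr (1 / (1 + st2 / 3 * K))" using eps st2 K by (intro pd_gt) auto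
    ultimately show ?thesis unfolding PD_multi_def by simp
  qed
  have partB: "eps < PD_single eps st2 N sn2 sv2 (PMM M) h
      \<and> PD_single eps st2 N sn2 sv2 (PMM M) h \<le> eps powr (1 / (1 + zeta h M))"
    if h: "\<forall>i<N. h i \<noteq> 0" and M: "M \<ge> 1" for h M
  proof -
    define L where "L = (\<Sum>i<N. 1 / ((cmod (h i))\<^sup>2 * (sv2 i)\<^sup>2))"
    have L: "L > 0" unfolding L_def by (rule S.L_pos[OF h])
    have P: "PMM M > 0" by (rule PMM_pos[OF M])
    have "0 < st2 * (PMM M / L) * K\<^sup>2 / ((PMM M / L) * K + sn2)"
      using st2 P L K sn2 by (intro divide_pos_pos mult_pos_pos add_pos_pos) auto
    also have "\<dots> \<le> S_single st2 N sn2 sv2 (PMM M) h"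
      using S.S_ge[OF h, of "PMM M"] P unfolding K_def L_def by simp
    finally have "eps < PD_single eps st2 N sn2 sv2 (PMM M) h"
      unfolding PD_single_def using eps by (intro pd_gt) auto
    then show ?thesis using PDb[OF M, of h] by simp
  qed
  have partR: "conv_in_prob Q (\<lambda>M \<omega>. zeta (\<lambda>i. H i \<omega>) M) 0
          \<and> conv_in_prob Q (\<lambda>M \<omega>. PD_single eps st2 N sn2 sv2 (PMM M) (\<lambda>i. H i \<omega>)) eps"
    if Q: "prob_space Q" and Hd: "\<forall>i<N. distributed Q lborel (H i) (cgauss_density (d i powr (- alpha)))"
    for Q :: "'a measure" and H :: "nat \<Rightarrow> 'a \<Rightarrow> complex"
  proof -
    define f where "f = (\<lambda>\<omega>. \<Sum>i<N. (cmod (H i \<omega>))\<^sup>2)"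
    define C where "C = (\<Sum>i<N. st2 * d i powr alpha / sv2 i)"
    have fm: "f \<in> borel_measurable Q" unfolding f_def
    proof (rule borel_measurable_sum)
      fix i assume "i \<in> {..<N}"
      then have "H i \<in> measurable Q lborel" using Hd distributed_measurable by blast
      then have [measurable]: "H i \<in> borel_measurable Q" by simp
      show "(\<lambda>\<omega>. (cmod (H i \<omega>))\<^sup>2) \<in> borel_measurable Q" by measurable
    qed
    have f0: "0 \<le> f \<omega>" for \<omega> unfolding f_def by (intro sum_nonneg) auto
    have C: "C > 0"
    proof -
      have tp: "0 < st2 * d i powr alpha / sv2 i" if "i < N" for i
        using d[OF that] sv2[OF that] st2 by simp
      have "C \<ge> (\<Sum>i<1. st2 * d i powr alpha / sv2 i)"
        unfolding C_def using N by (intro sum_mono2) (auto intro!: less_imp_le[OF tp])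
      moreover have "(\<Sum>i<1. st2 * d i powr alpha / sv2 i) > 0" using tp[of 0] N by simp
      ultimately show ?thesis by linarith
    qed
    have zf: "zeta (\<lambda>i. H i \<omega>) M = f \<omega> / (2 * real M) * C" for \<omega> M
      unfolding zeta_def f_def C_def ..
    have key: "f \<omega> > (2 * t / C) * real M" if M: "M \<ge> 1" and t: "zeta (\<lambda>i. H i \<omega>) M > t" for t \<omega> M
    proof -
      have Mp: "real M > 0" using M by simp
      have "t < f \<omega> / (2 * real M) * C" using t zf by simp
      then have "t * (2 * real M) < f \<omega> * C" using Mp by (simp add: field_simps)
      then have "t * (2 * real M) / C < f \<omega>" using C by (simp add: pos_divide_less_eq)
      then show ?thesis by (simp add: field_simps)
    qed
    have c1: "conv_in_prob Q (\<lambda>M \<omega>. zeta (\<lambda>i. H i \<omega>) M) 0"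
    proof (rule conv_tail[OF Q fm])
      fix e :: real assume e: "e > 0"
      show "\<exists>\<kappa>>0. \<forall>M \<omega>. M \<ge> 1 \<longrightarrow> \<omega> \<in> space Q \<longrightarrow> \<bar>zeta (\<lambda>i. H i \<omega>) M - 0\<bar> > e \<longrightarrow> f \<omega> > \<kappa> * real M"
      proof (intro exI[of _ "2 * e / C"] conjI allI impI)
        show "2 * e / C > 0" using e C by simp
        fix M \<omega> assume M: "M \<ge> 1" and "\<bar>zeta (\<lambda>i. H i \<omega>) M - 0\<bar> > e"
        moreover have "zeta (\<lambda>i. H i \<omega>) M \<ge> 0" unfolding zf using f0 C by simp
        ultimately have "zeta (\<lambda>i. H i \<omega>) M > e" by simp
        then show "f \<omega> > 2 * e / C * real M" by (rule key[OF M])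
      qed
    qed
    have c2: "conv_in_prob Q (\<lambda>M \<omega>. PD_single eps st2 N sn2 sv2 (PMM M) (\<lambda>i. H i \<omega>)) eps"
    proof (rule conv_tail[OF Q fm])
      fix e :: real assume e: "e > 0"
      obtain \<delta> where \<delta>: "\<delta> > 0" "eps powr (1 / (1 + \<delta>)) < eps + e" using pd_cont[OF eps e] by blast
      show "\<exists>\<kappa>>0. \<forall>M \<omega>. M \<ge> 1 \<longrightarrow> \<omega> \<in> space Q \<longrightarrow>
          \<bar>PD_single eps st2 N sn2 sv2 (PMM M) (\<lambda>i. H i \<omega>) - eps\<bar> > e \<longrightarrow> f \<omega> > \<kappa> * real M"
      proof (intro exI[of _ "2 * \<delta> / C"] conjI allI impI)
        show "2 * \<delta> / C > 0" using \<delta> C by simp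
        fix M \<omega> assume M: "M \<ge> 1" and big: "\<bar>PD_single eps st2 N sn2 sv2 (PMM M) (\<lambda>i. H i \<omega>) - eps\<bar> > e"
        have z0: "zeta (\<lambda>i. H i \<omega>) M \<ge> 0" unfolding zf using f0 C by simp
        have "zeta (\<lambda>i. H i \<omega>) M > \<delta>"
        proof (rule ccontr)
          assume "\<not> zeta (\<lambda>i. H i \<omega>) M > \<delta>"
          then have "eps powr (1 / (1 + zeta (\<lambda>i. H i \<omega>) M)) \<le> eps powr (1 / (1 + \<delta>))"
            using eps z0 by (intro pd_mono) auto
          then show False using PDb[OF M, of "\<lambda>i. H i \<omega>"] \<delta> big by linarith
        qed
        then show "f \<omega> > 2 * \<delta> / C * real M" by (rule key[OF M])
      qed
    qed
    show ?thesis using c1 c2 by blast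
  qed
  have partC: "(\<forall>P>0. PD_multi eps st2 N sn2 sv2 d alpha M P \<le> PDlim
               \<and> PD_single eps st2 N sn2 sv2 P h \<le> PDlim)
      \<and> mono_on {0<..} (PD_multi eps st2 N sn2 sv2 d alpha M)
      \<and> mono_on {0<..} (\<lambda>P. PD_single eps st2 N sn2 sv2 P h)
      \<and> (PD_multi eps st2 N sn2 sv2 d alpha M \<longlongrightarrow> PDlim) at_top
      \<and> ((\<lambda>P. PD_single eps st2 N sn2 sv2 P h) \<longlongrightarrow> PDlim) at_top"
    if M: "M \<ge> 1" and h: "\<forall>i<N. h i \<noteq> 0" for M h
  proof -
    interpret G: Gctx N sn2 alpha sv2 d M by unfold_locales (use N sn2 sv2 d M in auto)
    have sK: "1 + st2 * K \<noteq> 0" using mult_pos_pos[OF st2 K] by linarith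
    have PDl: "PDlim = eps powr (1 / (1 + st2 * K))" unfolding PDlim_def K_def ..
    have pm: "PD_multi eps st2 N sn2 sv2 d alpha M = (\<lambda>P. eps powr (1 / (1 + st2 * GM N sn2 sv2 d alpha M P)))"
      by (rule ext) (simp only: PD_multi_def)
    have ps: "(\<lambda>P. PD_single eps st2 N sn2 sv2 P h) = (\<lambda>P. eps powr (1 / (1 + S_single st2 N sn2 sv2 P h)))"
      by (rule ext) (simp only: PD_single_def)
    have b1: "\<forall>P>0. PD_multi eps st2 N sn2 sv2 d alpha M P \<le> PDlim \<and> PD_single eps st2 N sn2 sv2 P h \<le> PDlim"
    proof (intro allI impI conjI)
      fix P :: real assume P: "P > 0"
      have g0: "0 \<le> GM N sn2 sv2 d alpha M P" using G.GM_nonneg P by simp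
      have g1: "GM N sn2 sv2 d alpha M P \<le> K" using G.GM_props(1) P unfolding K_def by simp
      show "PD_multi eps st2 N sn2 sv2 d alpha M P \<le> PDlim" unfolding PDl PD_multi_def
        using eps st2 g0 g1 by (intro pd_mono) (auto intro!: mult_left_mono)
      have s0: "0 \<le> S_single st2 N sn2 sv2 P h" using SP(1) P by simp
      have s1: "S_single st2 N sn2 sv2 P h \<le> st2 * K" using SP(2) P unfolding K_def by simp
      show "PD_single eps st2 N sn2 sv2 P h \<le> PDlim" unfolding PDl PD_single_def
        using eps s0 s1 by (intro pd_mono) auto
    qed
    have m1: "mono_on {0<..} (PD_multi eps st2 N sn2 sv2 d alpha M)"
    proof (rule mono_onI)
      fix P P' :: real assume "P \<in> {0<..}" "P' \<in> {0<..}" "P \<le> P'"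
      then have P: "0 < P" "P \<le> P'" by auto
      have g0: "0 \<le> GM N sn2 sv2 d alpha M P" using G.GM_nonneg P by simp
      have "GM N sn2 sv2 d alpha M P \<le> GM N sn2 sv2 d alpha M P'" by (rule G.GM_mono[OF P])
      then show "PD_multi eps st2 N sn2 sv2 d alpha M P \<le> PD_multi eps st2 N sn2 sv2 d alpha M P'"
        unfolding PD_multi_def using eps st2 g0 by (intro pd_mono) (auto intro!: mult_left_mono)
    qed
    have m2: "mono_on {0<..} (\<lambda>P. PD_single eps st2 N sn2 sv2 P h)"
    proof (rule mono_onI)
      fix P P' :: real assume "P \<in> {0<..}" "P' \<in> {0<..}" "P \<le> P'"
      then have P: "0 < P" "P \<le> P'" by auto
      have s0: "0 \<le> S_single st2 N sn2 sv2 P h" using SP(1) P by simp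
      have "S_single st2 N sn2 sv2 P h \<le> S_single st2 N sn2 sv2 P' h" by (rule S.S_mono[OF P])
      then show "PD_single eps st2 N sn2 sv2 P h \<le> PD_single eps st2 N sn2 sv2 P' h"
        unfolding PD_single_def using eps s0 by (intro pd_mono) auto
    qed
    have l1: "(PD_multi eps st2 N sn2 sv2 d alpha M \<longlongrightarrow> PDlim) at_top"
      unfolding pm PDl
      using G.GM_lim K st2 eps sK unfolding K_def[symmetric]
      by (intro tendsto_intros) auto
    have Slim: "((\<lambda>P. S_single st2 N sn2 sv2 P h) \<longlongrightarrow> st2 * K) at_top"
    proof -
      define L where "L = (\<Sum>i<N. 1 / ((cmod (h i))\<^sup>2 * (sv2 i)\<^sup>2))"
      have L: "L > 0" unfolding L_def by (rule S.L_pos[OF h])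
      show ?thesis
      proof (rule tendsto_sandwich[OF _ _ lower_lim[OF K L sn2, of st2] tendsto_const])
        show "\<forall>\<^sub>F P in at_top. st2 * (P / L) * K\<^sup>2 / (P / L * K + sn2) \<le> S_single st2 N sn2 sv2 P h"
          using eventually_ge_at_top[of "0::real"]
        proof (rule eventually_mono)
          fix P :: real assume "0 \<le> P"
          then show "st2 * (P / L) * K\<^sup>2 / (P / L * K + sn2) \<le> S_single st2 N sn2 sv2 P h"
            using S.S_ge[OF h] unfolding K_def L_def by simp
        qed
        show "\<forall>\<^sub>F P in at_top. S_single st2 N sn2 sv2 P h \<le> st2 * K"
          using eventually_ge_at_top[of "0::real"]
          by (rule eventually_mono) (use SP(2) in \<open>simp add: K_def\<close>)
      qed
    qed
    have l2: "((\<lambda>P. PD_single eps st2 N sn2 sv2 P h) \<longlongrightarrow> PDlim) at_top"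
      unfolding ps PDl using Slim K st2 eps sK
      by (intro tendsto_intros) auto
    show ?thesis using b1 m1 m2 l1 l2 by blast
  qed
  show ?thesis
    apply (intro conjI)
    subgoal by (intro allI impI) (erule partA[unfolded K_def])
    subgoal by (intro allI impI) (erule (1) partB)
    subgoal by (intro allI impI, elim conjE) (erule partR, assumption)
    subgoal by (intro allI impI) (erule (1) partC)
    done
qed

end
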